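(* Let $G$ be a compactly generated locally compact second countable group and let $\{G_t\}_{t>0}$ be an increasing coarsely admissible family of bounded Borel subsets of $G$. Then for any bounded symmetric generating set $S$ of $G$ there exist $a=a(S)>0$ and $b=b(S)\ge0$ such that $S^n\subset G_{an+b}$ for all $n\ge1$.
   Context: With $m_G$ a left Haar measure on $G$, an increasing family $\{G_t\}$ of bounded Borel subsets of $G$ is coarsely admissible if (i) for every bounded $B\subset G$ there is $c=c_B>0$ such that $B\,G_t\,B\subset G_{t+c}$ for all sufficiently large $t$, and (ii) for every $c>0$ there is $d>0$ such that $m_G(G_{t+c})\le d\,m_G(G_t)$ for all sufficiently large $t$. *)

theory Defs
  imports "HOL-Analysis.Analysis"
begin

text \<open>The group G is a type of class topological_group_add (possibly non-commutative,
  written additively: the group product gh is g + h, the inverse is - g, the identity 0).\<close>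

definition setprod :: "'a::plus set \<Rightarrow> 'a set \<Rightarrow> 'a set" where
  "setprod A B = {a + b | a b. a \<in> A \<and> b \<in> B}"

primrec setpow :: "'a::monoid_add set \<Rightarrow> nat \<Rightarrow> 'a set" where
  "setpow S 0 = {0}"
| "setpow S (Suc n) = setprod (setpow S n) S"

definition generated_subgroup :: "'a::group_add set \<Rightarrow> 'a set" where
  "generated_subgroup A = \<Inter>{H. A \<subseteq> H \<and> 0 \<in> H \<and> (\<forall>x\<in>H. \<forall>y\<in>H. x + y \<in> H) \<and> (\<forall>x\<in>H. - x \<in> H)}"

text \<open>Bounded = relatively compact.\<close>
definition bounded_grp :: "'a::topological_space set \<Rightarrow> bool" where
  "bounded_grp A \<longleftrightarrow> compact (closure A)"

definition compactly_generated :: "'a::topological_group_add itself \<Rightarrow> bool" where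
  "compactly_generated _ \<longleftrightarrow> (\<exists>K::'a set. compact K \<and> generated_subgroup K = UNIV)"

definition left_haar_measure :: "'a::topological_group_add measure \<Rightarrow> bool" where
  "left_haar_measure M \<longleftrightarrow>
     sets M = sets borel \<and>
     (\<forall>g. \<forall>A\<in>sets borel. emeasure M ((\<lambda>x. g + x) ` A) = emeasure M A) \<and>
     (\<forall>K. compact K \<longrightarrow> emeasure M K < \<infinity>) \<and>
     (\<forall>U. open U \<and> U \<noteq> {} \<longrightarrow> emeasure M U > 0) \<and>
     (\<forall>A\<in>sets borel. emeasure M A = (INF U\<in>{U. open U \<and> A \<subseteq> U}. emeasure M U)) \<and>
     (\<forall>U. open U \<longrightarrow> emeasure M U = (SUP K\<in>{K. compact K \<and> K \<subseteq> U}. emeasure M K))"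

definition coarsely_admissible :: "'a::topological_group_add measure \<Rightarrow> (real \<Rightarrow> 'a set) \<Rightarrow> bool" where
  "coarsely_admissible M Gt \<longleftrightarrow>
     (\<forall>B. bounded_grp B \<longrightarrow> (\<exists>c>0. \<exists>T. \<forall>t\<ge>T. setprod (setprod B (Gt t)) B \<subseteq> Gt (t + c))) \<and>
     (\<forall>c>0. \<exists>d>0. \<exists>T. \<forall>t\<ge>T. emeasure M (Gt (t + c)) \<le> ennreal d * emeasure M (Gt t))"

end

theory Submission
  imports Defs
begin

theorem proposition3p8:
  fixes M :: "'a::{topological_group_add, t2_space, second_countable_topology} measure"
    and Gt :: "real \<Rightarrow> 'a set"
    and S :: "'a set"
  assumes "locally_compact_space (euclidean :: 'a topology)"
    and "compactly_generated TYPE('a)"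
    and "left_haar_measure M"
    and "\<And>t. t > 0 \<Longrightarrow> bounded_grp (Gt t) \<and> Gt t \<in> sets borel"
    and "\<And>s t. 0 < s \<Longrightarrow> s \<le> t \<Longrightarrow> Gt s \<subseteq> Gt t"
    and "\<exists>t>0. Gt t \<noteq> {}"
    and "coarsely_admissible M Gt"
    and "bounded_grp S" and "uminus ` S = S" and "generated_subgroup S = UNIV"
  shows "\<exists>a>0. \<exists>b\<ge>0. \<forall>n\<ge>1. setpow S n \<subseteq> Gt (a * real n + b)"
proof -
  obtain t0 g where t0: "t0 > 0" "g \<in> Gt t0" using assms(6) by blast
  define B where "B = S \<union> {0, - g}"
  have "closure B = closure S \<union> {0, -g}"
    unfolding B_def closure_Un
    using closure_closed[OF finite_imp_closed[of "{0, -g}"]] by simp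
  hence bB: "bounded_grp B" using assms(8)
    by (simp add: bounded_grp_def compact_Un)
  obtain c T where c: "c > 0" and cT: "\<And>t. t \<ge> T \<Longrightarrow> setprod (setprod B (Gt t)) B \<subseteq> Gt (t + c)"
    using assms(7) bB unfolding coarsely_admissible_def by blast
  define t1 where "t1 = max t0 T"
  have "g \<in> Gt t1" using assms(5)[of t0 t1] t0 unfolding t1_def by auto
  hence "(- g + g) + 0 \<in> setprod (setprod B (Gt t1)) B"
    unfolding setprod_def B_def by blast
  hence z: "0 \<in> Gt (t1 + c)" using cT[of t1] unfolding t1_def by auto
  define t2 where "t2 = t1 + c"
  have t2pos: "t2 \<ge> 0" using t0 c unfolding t2_def t1_def by auto
  have "setpow S n \<subseteq> Gt (t2 + real n * c)" for n
  proof (induction n)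
    case 0 then show ?case using z by (simp add: t2_def)
  next
    case (Suc n)
    have ge: "t2 + real n * c \<ge> T" using c unfolding t2_def t1_def
      by (smt (verit) mult_nonneg_nonneg of_nat_0_le_iff)
    have "setpow S (Suc n) \<subseteq> setprod (setprod B (Gt (t2 + real n * c))) B"
    proof
      fix x assume "x \<in> setpow S (Suc n)"
      then obtain y s where "x = y + s" "y \<in> setpow S n" "s \<in> S"
        by (auto simp: setprod_def)
      hence "x = (0 + y) + s" "y \<in> Gt (t2 + real n * c)" using Suc by auto
      thus "x \<in> setprod (setprod B (Gt (t2 + real n * c))) B"
        unfolding setprod_def B_def using \<open>s \<in> S\<close> by blast
    qed
    also have "\<dots> \<subseteq> Gt (t2 + real n * c + c)" using cT[OF ge] .
    finally show ?case by (simp add: algebra_simps)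
  qed
  thus ?thesis using c t2pos
    by (intro exI[of _ c] conjI exI[of _ t2]) (auto simp: algebra_simps)
qed

end
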